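(* For every $n\geq 4$, $c_0(W_n)=2$.
   Context: The wheel $W_n$ ($n\geq 4$) is the cycle $C_{n-1}$ together with one additional vertex adjacent to all cycle vertices. Graphs are reflexive (a player may stay in place). The 0-visibility game: $k$ cops and one robber; cops choose starting vertices, then the robber; in each round all cops move (each to an adjacent vertex or staying), then the robber moves. The cops never see the robber (the game ends when a cop occupies the robber's vertex), while the robber sees everything and knows the cops' strategy in advance; hence a cop strategy is a fixed sequence of positions of the cops, consecutive positions of each cop being equal or adjacent, and it is winning if every robber walk is caught after finitely many rounds. The 0-visibility cop number $c_0(G)$ is the least $k$ for which $k$ cops have a winning strategy. *)

theory Defs
  imports Main
begin

definition step :: "'v set \<Rightarrow> ('v \<Rightarrow> 'v \<Rightarrow> bool) \<Rightarrow> 'v \<Rightarrow> 'v \<Rightarrow> bool" where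
  "step V E u v \<longleftrightarrow> v \<in> V \<and> (u = v \<or> E u v)"

text \<open>A strategy for k cops: positions cops t i of cop i (i < k) at round t
  (round 0 = starting positions).\<close>
definition cop_strategy :: "'v set \<Rightarrow> ('v \<Rightarrow> 'v \<Rightarrow> bool) \<Rightarrow> nat \<Rightarrow> (nat \<Rightarrow> nat \<Rightarrow> 'v) \<Rightarrow> bool" where
  "cop_strategy V E k cops \<longleftrightarrow>
     (\<forall>i<k. cops 0 i \<in> V) \<and> (\<forall>t. \<forall>i<k. step V E (cops t i) (cops (Suc t) i))"

text \<open>A robber walk: r t is the robber's position after his move in round t
  (r 0 = starting position).\<close>
definition robber_walk :: "'v set \<Rightarrow> ('v \<Rightarrow> 'v \<Rightarrow> bool) \<Rightarrow> (nat \<Rightarrow> 'v) \<Rightarrow> bool" where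
  "robber_walk V E r \<longleftrightarrow> r 0 \<in> V \<and> (\<forall>t. step V E (r t) (r (Suc t)))"

text \<open>The robber is caught if at some moment a cop occupies his vertex: either after the
  robber's move in round t (cops at cops t), or after the cops' move in round t+1
  (robber still at r t).\<close>
definition caught :: "nat \<Rightarrow> (nat \<Rightarrow> nat \<Rightarrow> 'v) \<Rightarrow> (nat \<Rightarrow> 'v) \<Rightarrow> bool" where
  "caught k cops r \<longleftrightarrow> (\<exists>t. \<exists>i<k. cops t i = r t \<or> cops (Suc t) i = r t)"

definition winning :: "'v set \<Rightarrow> ('v \<Rightarrow> 'v \<Rightarrow> bool) \<Rightarrow> nat \<Rightarrow> (nat \<Rightarrow> nat \<Rightarrow> 'v) \<Rightarrow> bool" where
  "winning V E k cops \<longleftrightarrow> cop_strategy V E k cops \<and>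
     (\<forall>r. robber_walk V E r \<longrightarrow> caught k cops r)"

definition zero_vis_cop_number :: "'v set \<Rightarrow> ('v \<Rightarrow> 'v \<Rightarrow> bool) \<Rightarrow> nat" where
  "zero_vis_cop_number V E = (LEAST k. \<exists>cops. winning V E k cops)"

text \<open>The wheel W_n: hub 0, cycle vertices 1, ..., n-1 (cycle C_{n-1} in this order).\<close>
definition wheel_V :: "nat \<Rightarrow> nat set" where
  "wheel_V n = {0..<n}"

definition wheel_E :: "nat \<Rightarrow> nat \<Rightarrow> nat \<Rightarrow> bool" where
  "wheel_E n u v \<longleftrightarrow> u \<in> wheel_V n \<and> v \<in> wheel_V n \<and> u \<noteq> v \<and>
     ((u = 0 \<or> v = 0) \<or> u = Suc v \<or> v = Suc u \<or>
      (u = 1 \<and> v = n - 1) \<or> (v = 1 \<and> u = n - 1))"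

end

theory Submission
  imports Defs
begin

fun pick :: "nat list \<Rightarrow> nat \<Rightarrow> nat \<Rightarrow> nat" where
  "pick [] a b = 0"
| "pick (x#xs) a b = (if x \<noteq> a \<and> x \<noteq> b then x else pick xs a b)"

lemma pick_in: "card (set xs - {a,b}) > 0 \<Longrightarrow> pick xs a b \<in> set xs - {a,b}"
proof (induction xs)
  case Nil then show ?case by simp
next
  case (Cons x xs)
  show ?case
  proof (cases "x \<noteq> a \<and> x \<noteq> b")
    case True then show ?thesis by simp
  next
    case False
    then have "set (x#xs) - {a,b} = set xs - {a,b}" by auto
    with Cons show ?thesis using False by auto
  qed
qed

lemma pick3:
  assumes "distinct [x,y,z]"
  shows "pick [x,y,z] a b \<in> {x,y,z} \<and> pick [x,y,z] a b \<noteq> a \<and> pick [x,y,z] a b \<noteq> b"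
proof -
  have "card ({x,y,z} - {a,b}) \<ge> card {x,y,z} - card {a,b}"
    by (simp add: diff_card_le_card_Diff)
  moreover have "card {x,y,z} = 3" using assms by simp
  moreover have "card {a,b} \<le> 2" by (simp add: card_insert_le_m1)
  ultimately have "card (set [x,y,z] - {a,b}) > 0" by simp
  from pick_in[OF this] show ?thesis by auto
qed

definition sc :: "nat \<Rightarrow> nat \<Rightarrow> nat" where "sc m v = (if v = m then 1 else v + 1)"
definition pr :: "nat \<Rightarrow> nat \<Rightarrow> nat" where "pr m v = (if v = 1 then m else v - 1)"

lemma scpr_distinct: "v \<in> {1..m} \<Longrightarrow> (m::nat) \<ge> 3 \<Longrightarrow> distinct [v, sc m v, pr m v]"
  unfolding sc_def pr_def by (auto split: if_split)
lemma scpr_range: "v \<in> {1..m} \<Longrightarrow> (m::nat) \<ge> 3 \<Longrightarrow> w \<in> {v, sc m v, pr m v} \<Longrightarrow> w \<in> {1..m}"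
  unfolding sc_def pr_def by (auto split: if_splits)
lemma scpr_step: "v \<in> {1..m} \<Longrightarrow> m \<ge> 3 \<Longrightarrow> n = Suc m \<Longrightarrow> w \<in> {v, sc m v, pr m v}
   \<Longrightarrow> step (wheel_V n) (wheel_E n) v w"
  unfolding sc_def pr_def step_def wheel_E_def wheel_V_def by (auto split: if_splits)

primrec rob :: "nat \<Rightarrow> (nat \<Rightarrow> nat) \<Rightarrow> nat \<Rightarrow> nat" where
  "rob m c 0 = pick [1,2,3] (c 0) (c 1)"
| "rob m c (Suc t) = pick [rob m c t, sc m (rob m c t), pr m (rob m c t)] (c (Suc t)) (c (Suc (Suc t)))"

lemma rob_next:
  assumes "m \<ge> 3" "rob m c t \<in> {1..m}"
  shows "rob m c (Suc t) \<in> {rob m c t, sc m (rob m c t), pr m (rob m c t)} \<and>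
    rob m c (Suc t) \<noteq> c (Suc t) \<and> rob m c (Suc t) \<noteq> c (Suc (Suc t))"
  unfolding rob.simps(2)
  using pick3[OF scpr_distinct[OF assms(2,1)], of "c (Suc t)" "c (Suc (Suc t))"] by blast

lemma rob_inv:
  assumes "m \<ge> 3"
  shows "rob m c t \<in> {1..m} \<and> rob m c t \<noteq> c t \<and> rob m c t \<noteq> c (Suc t)"
proof (induction t)
  case 0
  have "distinct [1::nat,2,3]" by simp
  from pick3[OF this, of "c 0" "c 1"] show ?case using assms by auto
next
  case (Suc t)
  then have v: "rob m c t \<in> {1..m}" by blast
  from rob_next[OF assms v] scpr_range[OF v assms] show ?case by blast
qed

lemma rob_step:
  assumes "m \<ge> 3" "n = Suc m"
  shows "step (wheel_V n) (wheel_E n) (rob m c t) (rob m c (Suc t))"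
proof -
  have v: "rob m c t \<in> {1..m}" using rob_inv[OF assms(1)] by blast
  from rob_next[OF assms(1) v] scpr_step[OF v assms] show ?thesis by blast
qed

lemma no_one_cop:
  assumes "n \<ge> 4"
  shows "\<not> winning (wheel_V n) (wheel_E n) 1 cops"
proof
  assume w: "winning (wheel_V n) (wheel_E n) 1 cops"
  define m where "m = n - 1"
  have m: "m \<ge> 3" "n = Suc m" using assms m_def by auto
  define c where "c = (\<lambda>t. cops t 0)"
  define r where "r = rob m c"
  have "robber_walk (wheel_V n) (wheel_E n) r"
    unfolding robber_walk_def r_def
    using rob_inv[OF m(1), of c 0] rob_step[OF m] m by (auto simp: wheel_V_def)
  with w have "caught 1 cops r" by (simp add: winning_def)
  then obtain t where "cops t 0 = r t \<or> cops (Suc t) 0 = r t" by (auto simp: caught_def)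
  then show False using rob_inv[OF m(1), of c t] by (auto simp: r_def c_def)
qed

lemma no_zero_cop:
  assumes "n \<ge> 4"
  shows "\<not> winning (wheel_V n) (wheel_E n) 0 cops"
proof
  assume w: "winning (wheel_V n) (wheel_E n) 0 cops"
  have "robber_walk (wheel_V n) (wheel_E n) (\<lambda>_. 0)"
    using assms by (auto simp: robber_walk_def step_def wheel_V_def)
  with w have "caught 0 cops (\<lambda>_. 0)" by (simp add: winning_def)
  then show False by (simp add: caught_def)
qed

definition cops2 :: "nat \<Rightarrow> nat \<Rightarrow> nat \<Rightarrow> nat" where
  "cops2 n t i = (if i = 0 then (if even t then 0 else 1) else n - 1 - t)"

lemma two_cops:
  assumes "n \<ge> 4"
  shows "winning (wheel_V n) (wheel_E n) 2 (cops2 n)"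
  unfolding winning_def
proof (intro conjI allI impI)
  show "cop_strategy (wheel_V n) (wheel_E n) 2 (cops2 n)"
    unfolding cop_strategy_def
  proof (intro conjI allI impI)
    fix i :: nat assume "i < 2"
    then show "cops2 n 0 i \<in> wheel_V n" using assms by (auto simp: cops2_def wheel_V_def)
  next
    fix t i :: nat assume "i < 2"
    then have "i = 0 \<or> i = 1" by auto
    then show "step (wheel_V n) (wheel_E n) (cops2 n t i) (cops2 n (Suc t) i)"
    proof
      assume "i = 0" then show ?thesis using assms
        by (auto simp: cops2_def step_def wheel_E_def wheel_V_def)
    next
      assume "i = 1" then show ?thesis using assms
        by (cases "n - 1 - t = 0") (auto simp: cops2_def step_def wheel_E_def wheel_V_def)
    qed
  qed
next
  fix r assume rw: "robber_walk (wheel_V n) (wheel_E n) r"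
  show "caught 2 (cops2 n) r"
  proof (rule ccontr)
    assume nc: "\<not> caught 2 (cops2 n) r"
    have av: "r t \<noteq> cops2 n t i \<and> r t \<noteq> cops2 n (Suc t) i" if "i < 2" for t i
      using nc that unfolding caught_def by metis
    have inv: "2 \<le> r t \<and> r t + t + 3 \<le> n" for t
    proof (induction t)
      case 0
      have "r 0 < n" using rw by (simp add: robber_walk_def wheel_V_def)
      moreover have "r 0 \<noteq> 0" "r 0 \<noteq> 1" using av[of 0 0] by (auto simp: cops2_def)
      moreover have "r 0 \<noteq> n - 1" "r 0 \<noteq> n - 2" using av[of 1 0] by (auto simp: cops2_def)
      ultimately show ?case by auto
    next
      case (Suc t)
      have st: "step (wheel_V n) (wheel_E n) (r t) (r (Suc t))"
        using rw by (simp add: robber_walk_def)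
      have a0: "r (Suc t) \<noteq> 0 \<and> r (Suc t) \<noteq> 1"
        using av[of 0 "Suc t"] by (cases "even t") (auto simp: cops2_def)
      have a1: "r (Suc t) \<noteq> n - 1 - Suc t \<and> r (Suc t) \<noteq> n - 1 - Suc (Suc t)"
        using av[of 1 "Suc t"] by (auto simp: cops2_def)
      have "r (Suc t) \<le> r t + 1"
        using st Suc a0 by (auto simp: step_def wheel_E_def)
      with Suc a0 a1 show ?case by auto
    qed
    from inv[of n] show False by simp
  qed
qed

theorem mainTheorem19:
  fixes n :: nat
  assumes "n \<ge> 4"
  shows "zero_vis_cop_number (wheel_V n) (wheel_E n) = 2"
  unfolding zero_vis_cop_number_def
proof (rule Least_equality)
  show "\<exists>cops. winning (wheel_V n) (wheel_E n) 2 cops" using two_cops[OF assms] by blast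
next
  fix k assume "\<exists>cops. winning (wheel_V n) (wheel_E n) k cops"
  then obtain cops where w: "winning (wheel_V n) (wheel_E n) k cops" by blast
  show "2 \<le> k"
  proof (rule ccontr)
    assume "\<not> 2 \<le> k"
    then have "k = 0 \<or> k = 1" by auto
    then show False using w no_one_cop[OF assms] no_zero_cop[OF assms] by auto
  qed
qed

end
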